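(* Let $A$ be a partial ring and $\mathfrak{a}$ an ideal of $A$. Put $\sqrt{\mathfrak a}=\{a\in A:\exists r\in\mathbb{N},\ a^r\in\mathfrak a\}$. Then $\sqrt{\mathfrak a}=\bigcap_{\mathfrak p\in X_A,\ \mathfrak a\subseteq\mathfrak p}\mathfrak p$.
   Context: A partial ring is a set $A$ with $0$, a set $A_2\subseteq A\times A$ of summable pairs and a partial addition ($0$ a unit summable with everything; commutative; associative in the sense: $(a,b),(a+b,c)\in A_2$ iff $(b,c),(a,b+c)\in A_2$, and then $(a+b)+c=a+(b+c)$), with a commutative associative multiplication with unit $1$ such that $0\cdot a=0$ and $(a_1,a_2)\in A_2\Rightarrow(a_1x,a_2x)\in A_2$, $(a_1+a_2)x=a_1x+a_2x$. An ideal is a subset $I\ni 0$ with $a+b\in I$ whenever $a,b\in I$ and $(a,b)\in A_2$, and $AI\subseteq I$. A prime ideal is an ideal $\mathfrak p\neq A$ such that $xy\in\mathfrak p$ implies $x\in\mathfrak p$ or $y\in\mathfrak p$. $X_A$ is the set of prime ideals of $A$. (An empty intersection is $A$.) *)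

theory Defs
  imports Main
begin

text \<open>A partial ring: carrier A, zero z, unit u, summable pairs S, partial addition add,
  multiplication mul. Operations are only meaningful on the carrier (and add on S).\<close>

definition partial_ring ::
  "'a set \<Rightarrow> 'a \<Rightarrow> 'a \<Rightarrow> ('a \<times> 'a) set \<Rightarrow> ('a \<Rightarrow> 'a \<Rightarrow> 'a) \<Rightarrow> ('a \<Rightarrow> 'a \<Rightarrow> 'a) \<Rightarrow> bool"
where
  "partial_ring A z u S add mul \<longleftrightarrow>
     z \<in> A \<and> u \<in> A \<and> S \<subseteq> A \<times> A \<and>
     (\<forall>a b. (a, b) \<in> S \<longrightarrow> add a b \<in> A) \<and>
     (\<forall>a\<in>A. (a, z) \<in> S \<and> add a z = a) \<and>
     (\<forall>a b. (a, b) \<in> S \<longrightarrow> (b, a) \<in> S \<and> add a b = add b a) \<and>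
     (\<forall>a\<in>A. \<forall>b\<in>A. \<forall>c\<in>A.
        (((a, b) \<in> S \<and> (add a b, c) \<in> S) \<longleftrightarrow> ((b, c) \<in> S \<and> (a, add b c) \<in> S)) \<and>
        ((a, b) \<in> S \<and> (add a b, c) \<in> S \<longrightarrow> add (add a b) c = add a (add b c))) \<and>
     (\<forall>a\<in>A. \<forall>b\<in>A. mul a b \<in> A) \<and>
     (\<forall>a\<in>A. \<forall>b\<in>A. mul a b = mul b a) \<and>
     (\<forall>a\<in>A. \<forall>b\<in>A. \<forall>c\<in>A. mul (mul a b) c = mul a (mul b c)) \<and>
     (\<forall>a\<in>A. mul u a = a) \<and>
     (\<forall>a\<in>A. mul z a = z) \<and>
     (\<forall>a1 a2 x. (a1, a2) \<in> S \<and> x \<in> A \<longrightarrow>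
        (mul a1 x, mul a2 x) \<in> S \<and> mul (add a1 a2) x = add (mul a1 x) (mul a2 x))"

definition pr_ideal ::
  "'a set \<Rightarrow> 'a \<Rightarrow> ('a \<times> 'a) set \<Rightarrow> ('a \<Rightarrow> 'a \<Rightarrow> 'a) \<Rightarrow> ('a \<Rightarrow> 'a \<Rightarrow> 'a) \<Rightarrow> 'a set \<Rightarrow> bool"
where
  "pr_ideal A z S add mul I \<longleftrightarrow>
     I \<subseteq> A \<and> z \<in> I \<and>
     (\<forall>a\<in>I. \<forall>b\<in>I. (a, b) \<in> S \<longrightarrow> add a b \<in> I) \<and>
     (\<forall>x\<in>A. \<forall>a\<in>I. mul x a \<in> I)"

definition pr_prime ::
  "'a set \<Rightarrow> 'a \<Rightarrow> ('a \<times> 'a) set \<Rightarrow> ('a \<Rightarrow> 'a \<Rightarrow> 'a) \<Rightarrow> ('a \<Rightarrow> 'a \<Rightarrow> 'a) \<Rightarrow> 'a set \<Rightarrow> bool"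
where
  "pr_prime A z S add mul P \<longleftrightarrow>
     pr_ideal A z S add mul P \<and> P \<noteq> A \<and>
     (\<forall>x\<in>A. \<forall>y\<in>A. mul x y \<in> P \<longrightarrow> x \<in> P \<or> y \<in> P)"

definition pr_pow :: "'a \<Rightarrow> ('a \<Rightarrow> 'a \<Rightarrow> 'a) \<Rightarrow> 'a \<Rightarrow> nat \<Rightarrow> 'a" where
  "pr_pow u mul a n = (mul a ^^ n) u"

end

theory Submission
  imports Defs
begin

lemma pow_Suc: "pr_pow u mul a (Suc n) = mul a (pr_pow u mul a n)"
  by (simp add: pr_pow_def)

lemma pow_0: "pr_pow u mul a 0 = u"
  by (simp add: pr_pow_def)

lemma prA1: assumes "partial_ring A z u S add mul" shows "z \<in> A"
  using assms unfolding partial_ring_def by (elim conjE) assumption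

lemma prA2: assumes "partial_ring A z u S add mul" shows "u \<in> A"
  using assms unfolding partial_ring_def by (elim conjE) assumption

lemma prA3: assumes "partial_ring A z u S add mul" shows "S \<subseteq> A \<times> A"
  using assms unfolding partial_ring_def by (elim conjE) assumption

lemma prA4: assumes "partial_ring A z u S add mul" shows "\<forall>a b. (a, b) \<in> S \<longrightarrow> add a b \<in> A"
  using assms unfolding partial_ring_def by (elim conjE) assumption

lemma prA5: assumes "partial_ring A z u S add mul" shows "\<forall>a\<in>A. \<forall>b\<in>A. mul a b \<in> A"
  using assms unfolding partial_ring_def by (elim conjE) assumption

lemma prA6: assumes "partial_ring A z u S add mul" shows "\<forall>a\<in>A. \<forall>b\<in>A. mul a b = mul b a"
  using assms unfolding partial_ring_def by (elim conjE) assumption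

lemma prA7: assumes "partial_ring A z u S add mul" shows "\<forall>a\<in>A. \<forall>b\<in>A. \<forall>c\<in>A. mul (mul a b) c = mul a (mul b c)"
  using assms unfolding partial_ring_def by (elim conjE) assumption

lemma prA8: assumes "partial_ring A z u S add mul" shows "\<forall>a\<in>A. mul u a = a"
  using assms unfolding partial_ring_def by (elim conjE) assumption

lemma prA9: assumes "partial_ring A z u S add mul" shows "\<forall>a\<in>A. mul z a = z"
  using assms unfolding partial_ring_def by (elim conjE) assumption

lemma prA10: assumes "partial_ring A z u S add mul" shows "\<forall>a1 a2 x. (a1, a2) \<in> S \<and> x \<in> A \<longrightarrow>
        (mul a1 x, mul a2 x) \<in> S \<and> mul (add a1 a2) x = add (mul a1 x) (mul a2 x)"
  using assms unfolding partial_ring_def by (elim conjE) assumption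

lemma pr_assoc: assumes R: "partial_ring A z u S add mul" shows "a \<in> A \<Longrightarrow> b \<in> A \<Longrightarrow> c \<in> A \<Longrightarrow> mul (mul a b) c = mul a (mul b c)"
  using prA7[OF R] by blast
lemma pr_comm: assumes R: "partial_ring A z u S add mul" shows "a \<in> A \<Longrightarrow> b \<in> A \<Longrightarrow> mul a b = mul b a"
  using prA6[OF R] by blast
lemma pr_closed: assumes R: "partial_ring A z u S add mul" shows "a \<in> A \<Longrightarrow> b \<in> A \<Longrightarrow> mul a b \<in> A"
  using prA5[OF R] by blast
lemma pr_zero: assumes R: "partial_ring A z u S add mul" shows "a \<in> A \<Longrightarrow> mul z a = z"
  using prA9[OF R] by blast
lemma pr_u: assumes R: "partial_ring A z u S add mul" shows "u \<in> A"
  using prA2[OF R] by blast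
lemma pr_z: assumes R: "partial_ring A z u S add mul" shows "z \<in> A"
  using prA1[OF R] by blast
lemma pr_unit: assumes R: "partial_ring A z u S add mul" shows "a \<in> A \<Longrightarrow> mul u a = a"
  using prA8[OF R] by blast
lemma pr_add_in: assumes R: "partial_ring A z u S add mul" shows "(a,b) \<in> S \<Longrightarrow> add a b \<in> A"
  using prA4[OF R] by blast
lemma pr_S: assumes R: "partial_ring A z u S add mul" shows "(a,b) \<in> S \<Longrightarrow> a \<in> A \<and> b \<in> A"
  using prA3[OF R] by blast
lemma pr_distr: assumes R: "partial_ring A z u S add mul" shows "(a1,a2) \<in> S \<Longrightarrow> x \<in> A \<Longrightarrow>
   (mul a1 x, mul a2 x) \<in> S \<and> mul (add a1 a2) x = add (mul a1 x) (mul a2 x)"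
  using prA10[OF R] by blast

lemma pow_in:
  assumes "partial_ring A z u S add mul" "a \<in> A"
  shows "pr_pow u mul a n \<in> A"
  using assms by (induct n) (auto simp: pow_0 pow_Suc pr_u pr_closed)

lemma pow_add:
  assumes "partial_ring A z u S add mul" "a \<in> A"
  shows "pr_pow u mul a (m + n) = mul (pr_pow u mul a m) (pr_pow u mul a n)"
proof (induct m)
  case 0
  then show ?case using assms pow_in[OF assms] by (simp add: pow_0 pr_unit)
next
  case (Suc m)
  have "pr_pow u mul a (Suc m + n) = mul a (pr_pow u mul a (m + n))" by (simp add: pow_Suc)
  also have "\<dots> = mul a (mul (pr_pow u mul a m) (pr_pow u mul a n))" using Suc by simp
  also have "\<dots> = mul (mul a (pr_pow u mul a m)) (pr_pow u mul a n)"
    using assms pow_in[OF assms] pr_assoc[OF assms(1)] by simp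
  finally show ?case by (simp add: pow_Suc)
qed

lemma colon_ideal:
  assumes R: "partial_ring A z u S add mul" and P: "pr_ideal A z S add mul P" and c: "c \<in> A"
  shows "pr_ideal A z S add mul {b \<in> A. mul c b \<in> P}"
proof -
  note P' = P[unfolded pr_ideal_def]
  have "mul c z = z" using pr_comm[OF R c pr_z[OF R]] pr_zero[OF R c] by simp
  moreover have "z \<in> A" using pr_z[OF R] by blast
  ultimately have z: "z \<in> {b \<in> A. mul c b \<in> P}" using P' by simp
  have sum: "add b1 b2 \<in> {b \<in> A. mul c b \<in> P}"
    if "b1 \<in> {b \<in> A. mul c b \<in> P}" "b2 \<in> {b \<in> A. mul c b \<in> P}" "(b1,b2) \<in> S" for b1 b2
  proof -
    have ab: "add b1 b2 \<in> A" using pr_add_in[OF R] that by blast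
    have "(mul b1 c, mul b2 c) \<in> S \<and> mul (add b1 b2) c = add (mul b1 c) (mul b2 c)"
      using pr_distr[OF R] that c by blast
    moreover have "mul b1 c = mul c b1" "mul b2 c = mul c b2" "mul (add b1 b2) c = mul c (add b1 b2)"
      using pr_comm[OF R] that c ab by auto
    ultimately show ?thesis using P' that ab by auto
  qed
  have mulc: "mul x b \<in> {b \<in> A. mul c b \<in> P}" if "x \<in> A" "b \<in> {b \<in> A. mul c b \<in> P}" for x b
  proof -
    have "mul c (mul x b) = mul (mul c x) b" using pr_assoc[OF R] that c by simp
    also have "\<dots> = mul (mul x c) b" using pr_comm[OF R] that c by simp
    also have "\<dots> = mul x (mul c b)" using pr_assoc[OF R] that c by simp
    finally have "mul c (mul x b) = mul x (mul c b)" .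
    then show ?thesis using pr_closed[OF R] P' that by auto
  qed
  show ?thesis unfolding pr_ideal_def using z sum mulc by blast
qed

theorem mainTheorem19:
  assumes "partial_ring A z u S add mul"
    and "pr_ideal A z S add mul I"
  shows "{a \<in> A. \<exists>r::nat. pr_pow u mul a r \<in> I}
       = A \<inter> \<Inter> {P. pr_prime A z S add mul P \<and> I \<subseteq> P}"
proof
  note R = assms(1)
  show "{a \<in> A. \<exists>r::nat. pr_pow u mul a r \<in> I} \<subseteq> A \<inter> \<Inter> {P. pr_prime A z S add mul P \<and> I \<subseteq> P}"
  proof (clarsimp)
    fix a r P assume a: "a \<in> A" and r: "pr_pow u mul a r \<in> I" and pp: "pr_prime A z S add mul P" and IP: "I \<subseteq> P"
    have "pr_pow u mul a n \<in> P \<Longrightarrow> a \<in> P" for n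
    proof (induct n)
      case 0
      then have "u \<in> P" by (simp add: pow_0)
      have "\<forall>x\<in>A. mul x u \<in> P" using pp \<open>u \<in> P\<close> unfolding pr_prime_def pr_ideal_def by blast
      moreover have "\<forall>x\<in>A. mul x u = x" using pr_unit[OF R] pr_comm[OF R] pr_u[OF R] by simp
      ultimately have "\<forall>x\<in>A. x \<in> P" by simp
      then show ?case using a pp unfolding pr_prime_def pr_ideal_def by blast
    next
      case (Suc n)
      then show ?case using pp a pow_in[OF R a] unfolding pr_prime_def by (auto simp: pow_Suc)
    qed
    then show "a \<in> P" using r IP by blast
  qed
  show "A \<inter> \<Inter> {P. pr_prime A z S add mul P \<and> I \<subseteq> P} \<subseteq> {a \<in> A. \<exists>r::nat. pr_pow u mul a r \<in> I}"
  proof (rule subsetI, rule ccontr)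
    fix a assume a0: "a \<in> A \<inter> \<Inter> {P. pr_prime A z S add mul P \<and> I \<subseteq> P}"
      and na: "a \<notin> {a \<in> A. \<exists>r::nat. pr_pow u mul a r \<in> I}"
    have a: "a \<in> A" using a0 by blast
    have nI: "\<forall>r. pr_pow u mul a r \<notin> I" using na a by blast
    define F where "F = {Q. pr_ideal A z S add mul Q \<and> I \<subseteq> Q \<and> (\<forall>r. pr_pow u mul a r \<notin> Q)}"
    have "\<exists>M\<in>F. \<forall>X\<in>F. M \<subseteq> X \<longrightarrow> X = M"
    proof (rule subset_Zorn_nonempty)
      show "F \<noteq> {}" using assms(2) nI unfolding F_def by blast
    next
      fix C assume C: "C \<noteq> {}" "subset.chain F C"
      have CF: "C \<subseteq> F" and ch: "\<forall>X\<in>C. \<forall>Y\<in>C. X \<subseteq> Y \<or> Y \<subseteq> X"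
        using C(2) unfolding subset.chain_def by auto
      have ideal: "pr_ideal A z S add mul (\<Union>C)"
        unfolding pr_ideal_def
      proof (intro conjI ballI impI)
        show "\<Union>C \<subseteq> A" using CF unfolding F_def pr_ideal_def by blast
        show "z \<in> \<Union>C" using C(1) CF unfolding F_def pr_ideal_def by blast
      next
        fix b c assume "b \<in> \<Union>C" "c \<in> \<Union>C" "(b,c) \<in> S"
        then obtain X Y where XY: "X \<in> C" "Y \<in> C" "b \<in> X" "c \<in> Y" by blast
        show "add b c \<in> \<Union>C"
        proof (cases "X \<subseteq> Y")
          case True
          then show ?thesis using XY CF \<open>(b,c) \<in> S\<close> unfolding F_def pr_ideal_def by blast
        next
          case False
          then have "Y \<subseteq> X" using ch XY by blast
          then show ?thesis using XY CF \<open>(b,c) \<in> S\<close> unfolding F_def pr_ideal_def by blast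
        qed
      next
        fix x b assume "x \<in> A" "b \<in> \<Union>C"
        then show "mul x b \<in> \<Union>C" using CF unfolding F_def pr_ideal_def by blast
      qed
      show "\<Union>C \<in> F" using ideal C(1) CF unfolding F_def by blast
    qed
    then obtain P where PF: "P \<in> F" and maxP: "\<And>X. X \<in> F \<Longrightarrow> P \<subseteq> X \<Longrightarrow> X = P" by blast
    have Pid: "pr_ideal A z S add mul P" and IP: "I \<subseteq> P" and Pa: "\<forall>r. pr_pow u mul a r \<notin> P"
      using PF unfolding F_def by auto
    have PA: "P \<subseteq> A" using Pid unfolding pr_ideal_def by blast
    have colF: "{b \<in> A. mul c b \<in> P} \<in> F" if "c \<in> A" "\<forall>r. pr_pow u mul a r \<notin> {b \<in> A. mul c b \<in> P}" for c
    proof -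
      have "P \<subseteq> {b \<in> A. mul c b \<in> P}" using Pid PA that(1) unfolding pr_ideal_def by blast
      then show ?thesis using colon_ideal[OF R Pid that(1)] IP that(2) unfolding F_def by blast
    qed
    have prime: "pr_prime A z S add mul P"
      unfolding pr_prime_def
    proof (intro conjI ballI impI)
      show "pr_ideal A z S add mul P" by fact
      have "u \<in> A" using pr_u[OF R] by blast
      then show "P \<noteq> A" using Pa pow_0 by metis
    next
      fix x y assume x: "x \<in> A" and y: "y \<in> A" and xy: "mul x y \<in> P"
      show "x \<in> P \<or> y \<in> P"
      proof (rule ccontr)
        assume "\<not> (x \<in> P \<or> y \<in> P)"
        then have xP: "x \<notin> P" and yP: "y \<notin> P" by auto
        have sup: "P \<subseteq> {b \<in> A. mul y b \<in> P}" using Pid PA y unfolding pr_ideal_def by blast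
        have "mul y x = mul x y" using x y pr_comm[OF R] by blast
        then have "x \<in> {b \<in> A. mul y b \<in> P}" using x xy by simp
        then have "{b \<in> A. mul y b \<in> P} \<noteq> P" using xP by blast
        then have "{b \<in> A. mul y b \<in> P} \<notin> F" using maxP sup by blast
        then obtain m where m: "pr_pow u mul a m \<in> A" "mul y (pr_pow u mul a m) \<in> P"
          using colF[OF y] by blast
        have disj: "\<forall>r. pr_pow u mul a r \<notin> {b \<in> A. mul (pr_pow u mul a m) b \<in> P}"
          using Pa pow_add[OF R a] by (simp add: pow_add[OF R a, symmetric])
        have sup2: "P \<subseteq> {b \<in> A. mul (pr_pow u mul a m) b \<in> P}"
          using Pid PA m(1) unfolding pr_ideal_def by blast
        have eq: "{b \<in> A. mul (pr_pow u mul a m) b \<in> P} = P"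
          using maxP[OF colF[OF m(1) disj] sup2] .
        have "mul (pr_pow u mul a m) y = mul y (pr_pow u mul a m)" using m y pr_comm[OF R] by blast
        then have "mul (pr_pow u mul a m) y \<in> P" using m by simp
        then have "y \<in> P" using eq y by blast
        then show False using yP by blast
      qed
    qed
    have "a \<in> P" using a0 prime IP by blast
    have "u \<in> A" "mul u a = a" "mul u a = mul a u" using pr_u[OF R] pr_unit[OF R] pr_comm[OF R] a by auto
    then have "pr_pow u mul a 1 = a" by (simp add: pr_pow_def)
    then show False using Pa \<open>a \<in> P\<close> by metis
  qed
qed

end
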